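(* Let $P$ be a finite poset. Then $S_N(S_N(P))$ is $N$-free. Moreover, $S_N(S_N(P))$ is the smallest $N$-free poset obtained as a barycentric subdivision of $\mathrm{Diag}(P)$: every $N$-free poset $Q$ obtained from a barycentric subdivision of $\mathrm{Diag}(P)$ contains $S_N(S_N(P))$, in the sense that every edge of $\mathrm{Diag}(P)$ on which a vertex is added in $S_N(S_N(P))$ also receives at least one added vertex in $Q$.
   Context: For a poset $P$, a covering pair is a pair $(x,y)$ with $x<y$ and no $z$ with $x<z<y$; we write $x\prec y$. $\mathrm{Diag}(P)$ is the directed graph on $P$ whose edges are the covering pairs. $\mathrm{Inc}(P)$ is the set of pairs of incomparable elements. Four elements $a,b,c,d$ of $P$ form an $N$ in $P$ if $b\prec c$, $a\prec c$, $b\prec d$ and $(a,d)\in\mathrm{Inc}(P)$; the pair $(b,c)$ is then the diagonal edge of this $N$. $P$ is $N$-free if it contains no $N$. $N_{diag}(P)$ denotes the set of diagonal edges of all $N$'s in $P$. A barycentric subdivision of $\mathrm{Diag}(P)$ consists of adding finitely many (possibly zero) new vertices on each edge of $\mathrm{Diag}(P)$ (a new vertex $u$ on edge $(x,y)$ subdivides it into $x\prec u\prec y$, several added vertices forming a chain); the resulting vertex set with the induced order (transitive closure) is a poset containing $P$ as a subposet. $S_N(P)$ is the poset obtained from $P$ by adding one new (dummy) vertex on each edge of $N_{diag}(P)$. *)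

theory Defs
  imports Main
begin

text \<open>A poset is a carrier set together with a (reflexive) order relation on it,
  required to satisfy the library predicate partial_order_on.\<close>
type_synonym 'a poset = "'a set \<times> 'a rel"

definition pless :: "'a poset \<Rightarrow> 'a \<Rightarrow> 'a \<Rightarrow> bool" where
  "pless P x y \<longleftrightarrow> (x, y) \<in> snd P \<and> x \<noteq> y"

definition covers :: "'a poset \<Rightarrow> 'a \<Rightarrow> 'a \<Rightarrow> bool" where
  "covers P x y \<longleftrightarrow> x \<in> fst P \<and> y \<in> fst P \<and> pless P x y \<and>
     \<not> (\<exists>z \<in> fst P. pless P x z \<and> pless P z y)"

definition Diag :: "'a poset \<Rightarrow> 'a rel" where
  "Diag P = {(x, y). covers P x y}"

definition Inc :: "'a poset \<Rightarrow> 'a rel" where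
  "Inc P = {(x, y). x \<in> fst P \<and> y \<in> fst P \<and> (x, y) \<notin> snd P \<and> (y, x) \<notin> snd P}"

definition is_N :: "'a poset \<Rightarrow> 'a \<Rightarrow> 'a \<Rightarrow> 'a \<Rightarrow> 'a \<Rightarrow> bool" where
  "is_N P a b c d \<longleftrightarrow> covers P b c \<and> covers P a c \<and> covers P b d \<and> (a, d) \<in> Inc P"

definition N_free :: "'a poset \<Rightarrow> bool" where
  "N_free P \<longleftrightarrow> \<not> (\<exists>a b c d. is_N P a b c d)"

definition N_diag :: "'a poset \<Rightarrow> 'a rel" where
  "N_diag P = {(b, c). \<exists>a d. is_N P a b c d}"

text \<open>Barycentric subdivision of Diag P, adding k (x,y) new vertices on each
  covering edge (x,y). Old vertices are Inl x; the i-th new vertex on edge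
  (x,y) is Inr (x,y,i), 1 \<le> i \<le> k (x,y). The chain on edge (x,y) is
  x = node 0, node 1, ..., node (k+1) = y.\<close>
definition sd_node :: "('a \<times> 'a \<Rightarrow> nat) \<Rightarrow> 'a \<Rightarrow> 'a \<Rightarrow> nat \<Rightarrow> 'a + ('a \<times> 'a \<times> nat)" where
  "sd_node k x y i = (if i = 0 then Inl x else if i = Suc (k (x, y)) then Inl y else Inr (x, y, i))"

definition sd_carrier :: "'a poset \<Rightarrow> ('a \<times> 'a \<Rightarrow> nat) \<Rightarrow> ('a + ('a \<times> 'a \<times> nat)) set" where
  "sd_carrier P k = Inl ` fst P \<union>
     {Inr (x, y, i) | x y i. (x, y) \<in> Diag P \<and> 1 \<le> i \<and> i \<le> k (x, y)}"

definition sd_edges :: "'a poset \<Rightarrow> ('a \<times> 'a \<Rightarrow> nat) \<Rightarrow> ('a + ('a \<times> 'a \<times> nat)) rel" where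
  "sd_edges P k = {(sd_node k x y i, sd_node k x y (Suc i)) | x y i. (x, y) \<in> Diag P \<and> i \<le> k (x, y)}"

definition subdiv :: "'a poset \<Rightarrow> ('a \<times> 'a \<Rightarrow> nat) \<Rightarrow> ('a + ('a \<times> 'a \<times> nat)) poset" where
  "subdiv P k = (sd_carrier P k, Id_on (sd_carrier P k) \<union> (sd_edges P k)\<^sup>+)"

definition SN :: "'a poset \<Rightarrow> ('a + ('a \<times> 'a \<times> nat)) poset" where
  "SN P = subdiv P (\<lambda>e. if e \<in> N_diag P then 1 else 0)"

end

theory Submission
  imports Defs
begin


locale fpo =
  fixes A :: "'a set" and r :: "'a rel"
  assumes fin: "finite A" and po: "partial_order_on A r"
begin

lemma sub: "(x,y)\<in>r \<Longrightarrow> x\<in>A \<and> y\<in>A"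
  using po unfolding partial_order_on_def preorder_on_def by blast
lemma rfl: "x\<in>A \<Longrightarrow> (x,x)\<in>r"
  using po unfolding partial_order_on_def preorder_on_def refl_on_def by blast
lemma trn: "(x,y)\<in>r \<Longrightarrow> (y,z)\<in>r \<Longrightarrow> (x,z)\<in>r"
  using po unfolding partial_order_on_def preorder_on_def trans_def by blast
lemma asym: "(x,y)\<in>r \<Longrightarrow> (y,x)\<in>r \<Longrightarrow> x=y"
  using po unfolding partial_order_on_def antisym_def by blast

lemma cov_iff: "covers (A,r) x y \<longleftrightarrow> (x,y)\<in>r \<and> x\<noteq>y \<and> \<not>(\<exists>z. (x,z)\<in>r \<and> (z,y)\<in>r \<and> z\<noteq>x \<and> z\<noteq>y)"
  unfolding covers_def pless_def using sub by auto

lemma diag_iff: "(x,y) \<in> Diag (A,r) \<longleftrightarrow> covers (A,r) x y"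
  unfolding Diag_def by simp

lemma diag_trancl_aux:
  "card {z. (x,z)\<in>r \<and> (z,y)\<in>r \<and> z\<noteq>x \<and> z\<noteq>y} = n \<Longrightarrow> (x,y)\<in>r \<Longrightarrow> x\<noteq>y \<Longrightarrow> (x,y) \<in> (Diag (A,r))\<^sup>+"
proof (induction n arbitrary: x y rule: less_induct)
  case (less n)
  show ?case
  proof (cases "covers (A,r) x y")
    case True then show ?thesis by (simp add: diag_iff r_into_trancl')
  next
    case False
    then obtain z where z: "(x,z)\<in>r" "(z,y)\<in>r" "z\<noteq>x" "z\<noteq>y" using less.prems cov_iff by blast
    let ?S = "\<lambda>x y. {z. (x,z)\<in>r \<and> (z,y)\<in>r \<and> z\<noteq>x \<and> z\<noteq>y}"
    have fS: "finite (?S x y)" by (rule finite_subset[OF _ fin]) (auto dest: sub)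
    have s1: "?S x z \<subset> ?S x y"
    proof -
      have "?S x z \<subseteq> ?S x y" using z by (auto intro: trn dest: asym)
      moreover have "z \<in> ?S x y" "z \<notin> ?S x z" using z by auto
      ultimately show ?thesis by blast
    qed
    have s2: "?S z y \<subset> ?S x y"
    proof -
      have "?S z y \<subseteq> ?S x y" using z by (auto intro: trn dest: asym)
      moreover have "z \<in> ?S x y" "z \<notin> ?S z y" using z by auto
      ultimately show ?thesis by blast
    qed
    have "card (?S x z) < n" using psubset_card_mono[OF fS s1] less.prems by simp
    then have 1: "(x,z) \<in> (Diag (A,r))\<^sup>+" using less.IH z by blast
    have "card (?S z y) < n" using psubset_card_mono[OF fS s2] less.prems by simp
    then have 2: "(z,y) \<in> (Diag (A,r))\<^sup>+" using less.IH z by blast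
    show ?thesis using 1 2 by simp
  qed
qed

lemma diag_trancl: "(x,y)\<in>r \<Longrightarrow> x\<noteq>y \<Longrightarrow> (x,y) \<in> (Diag (A,r))\<^sup>+"
  using diag_trancl_aux by blast

lemma diag_r: "(x,y) \<in> (Diag (A,r))\<^sup>+ \<Longrightarrow> (x,y) \<in> r"
  by (induction rule: trancl_induct) (auto simp: diag_iff cov_iff intro: trn)

lemma diag_rt: "(x,y) \<in> (Diag (A,r))\<^sup>* \<Longrightarrow> x \<in> A \<Longrightarrow> (x,y) \<in> r"
  by (metis diag_r rfl rtranclD)

lemma cover_above: "(x,y)\<in>r \<Longrightarrow> x\<noteq>y \<Longrightarrow> \<exists>f. covers (A,r) x f \<and> (f,y)\<in>r"
  by (metis converse_tranclE diag_iff diag_r diag_trancl sub rfl r_into_rtrancl trancl_into_rtrancl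
        diag_rt)

lemma cover_below: "(x,y)\<in>r \<Longrightarrow> x\<noteq>y \<Longrightarrow> \<exists>f. (x,f)\<in>r \<and> covers (A,r) f y"
  by (metis tranclE diag_iff diag_r diag_trancl sub rfl diag_rt trancl_into_rtrancl)

definition cfg where "cfg b c a d \<longleftrightarrow> covers (A,r) b c \<and> covers (A,r) a c \<and> covers (A,r) b d \<and> a\<noteq>b \<and> d\<noteq>c"

lemma isN_iff: "is_N (A,r) a b c d \<longleftrightarrow> cfg b c a d \<and> (a,d)\<notin>r"
  unfolding is_N_def cfg_def Inc_def using sub
  apply (auto simp: cov_iff)
  apply (meson trn asym)+
  done

lemma ND0: "(b,c) \<in> N_diag (A,r) \<longleftrightarrow> (\<exists>a d. cfg b c a d \<and> (a,d)\<notin>r)"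
  proof -
  have "(b,c) \<in> N_diag (A,r) \<longleftrightarrow> (\<exists>a d. is_N (A,r) a b c d)" unfolding N_diag_def by simp
  then show ?thesis using isN_iff by simp
qed

end


context fpo begin

definition good where "good b c \<longleftrightarrow> (\<forall>a d. cfg b c a d \<longrightarrow> (a,c)\<notin>N_diag (A,r) \<and> (b,d)\<notin>N_diag (A,r) \<and> (a,d)\<in>r)"

lemma good_ND: "good b c \<Longrightarrow> (b,c) \<notin> N_diag (A,r)"
  unfolding good_def ND0 by blast

lemma UP:
  assumes "covers (A,r) b c" "covers (A,r) a c" "a\<noteq>b" "\<And>f. cfg b c a f \<Longrightarrow> (a,f)\<in>r"
    "(b,e)\<in>r" "covers (A,r) a e"
  shows "covers (A,r) b e"
proof -
  have "e \<noteq> b" using assms by (metis cov_iff)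
  then obtain f where f: "covers (A,r) b f" "(f,e)\<in>r" using cover_above assms(5) by blast
  show ?thesis
  proof (cases "f = c")
    case True
    then show ?thesis using assms f by (metis cov_iff)
  next
    case False
    then have "(a,f)\<in>r" using assms(4) f(1) assms unfolding cfg_def by blast
    then have "f = e \<or> f = a" using f assms(6) cov_iff by blast
    then show ?thesis using f assms by (metis cov_iff)
  qed
qed

lemma DOWN:
  assumes "covers (A,r) b c" "covers (A,r) b d" "d\<noteq>c" "\<And>f. cfg b c f d \<Longrightarrow> (f,d)\<in>r"
    "(e,c)\<in>r" "covers (A,r) e d"
  shows "covers (A,r) e c"
proof -
  have "e \<noteq> c" using assms by (metis cov_iff)
  then obtain f where f: "(e,f)\<in>r" "covers (A,r) f c" using cover_below assms(5) by blast
  show ?thesis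
  proof (cases "f = b")
    case True
    then show ?thesis using assms f by (metis cov_iff)
  next
    case False
    then have "(f,d)\<in>r" using assms(4) f(2) assms unfolding cfg_def by blast
    then have "f = e \<or> f = d" using f assms(6) cov_iff by blast
    then show ?thesis using f assms by (metis cov_iff)
  qed
qed

lemma PA:
  assumes g: "good b c" and c1: "cfg b c a d" and c2: "cfg a c a2 d2"
    and h: "(a2,c)\<in>N_diag (A,r) \<or> (a,d2)\<in>N_diag (A,r) \<or> (a2,d2)\<notin>r"
  shows False
proof -
  have acn: "(a,c) \<notin> N_diag (A,r)" using g c1 unfolding good_def by blast
  have bcn: "(b,c) \<notin> N_diag (A,r)" using g good_ND by blast
  have allr: "\<And>a' d'. cfg b c a' d' \<Longrightarrow> (a',d')\<in>r" using g unfolding good_def by blast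
  have acr: "\<And>a' d'. cfg a c a' d' \<Longrightarrow> (a',d')\<in>r" using acn ND0 by blast
  { assume "(a2,d2)\<notin>r" then have False using acr c2 by blast }
  moreover
  { assume a2: "(a2,c)\<in>N_diag (A,r)"
    have "a2 \<noteq> b" using a2 bcn by blast
    then have "cfg b c a2 d" using c1 c2 unfolding cfg_def by blast
    then have False using g a2 unfolding good_def by blast }
  moreover
  { assume ad: "(a,d2)\<in>N_diag (A,r)"
    then obtain a3 d3 where c3: "cfg a d2 a3 d3" "(a3,d3)\<notin>r" using ND0 by blast
    have "cfg a c b d2" using c1 c2 unfolding cfg_def by blast
    then have "(b,d2)\<in>r" using acr by blast
    then have bd2: "covers (A,r) b d2"
      using UP[of b c a d2] c1 c2 allr unfolding cfg_def by blast
    have bd3: "covers (A,r) b d3"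
    proof (cases "d3 = c")
      case True then show ?thesis using c1 unfolding cfg_def by blast
    next
      case False
      then have "cfg a c b d3" using c1 c3 unfolding cfg_def by blast
      then have "(b,d3)\<in>r" using acr by blast
      then show ?thesis using UP[of b c a d3] c1 c3 allr unfolding cfg_def by blast
    qed
    have "a3 \<noteq> b" using c3 bd3 cov_iff by blast
    then have "cfg b d2 a3 d3" using bd2 bd3 c3 unfolding cfg_def by blast
    then have "(b,d2) \<in> N_diag (A,r)" using c3 ND0 by blast
    moreover have "cfg b c a d2" using c1 c2 bd2 unfolding cfg_def by blast
    ultimately have False using g unfolding good_def by blast }
  ultimately show False using h by blast
qed

lemma PB:
  assumes g: "good b c" and c1: "cfg b c a d" and c2: "cfg b d a2 d2"
    and h: "(a2,d)\<in>N_diag (A,r) \<or> (b,d2)\<in>N_diag (A,r) \<or> (a2,d2)\<notin>r"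
  shows False
proof -
  have bdn: "(b,d) \<notin> N_diag (A,r)" using g c1 unfolding good_def by blast
  have bcn: "(b,c) \<notin> N_diag (A,r)" using g good_ND by blast
  have allr: "\<And>a' d'. cfg b c a' d' \<Longrightarrow> (a',d')\<in>r" using g unfolding good_def by blast
  have bdr: "\<And>a' d'. cfg b d a' d' \<Longrightarrow> (a',d')\<in>r" using bdn ND0 by blast
  { assume "(a2,d2)\<notin>r" then have False using bdr c2 by blast }
  moreover
  { assume a2: "(b,d2)\<in>N_diag (A,r)"
    have "d2 \<noteq> c" using a2 bcn by blast
    then have "cfg b c a d2" using c1 c2 unfolding cfg_def by blast
    then have False using g a2 unfolding good_def by blast }
  moreover
  { assume ad: "(a2,d)\<in>N_diag (A,r)"
    then obtain a3 d3 where c3: "cfg a2 d a3 d3" "(a3,d3)\<notin>r" using ND0 by blast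
    have "cfg b d a2 c" using c1 c2 unfolding cfg_def by blast
    then have "(a2,c)\<in>r" using bdr by blast
    then have a2c: "covers (A,r) a2 c"
      using DOWN[of b c d a2] c1 c2 allr unfolding cfg_def by blast
    have a3c: "covers (A,r) a3 c"
    proof (cases "a3 = b")
      case True then show ?thesis using c1 unfolding cfg_def by blast
    next
      case False
      then have "cfg b d a3 c" using c1 c3 unfolding cfg_def by blast
      then have "(a3,c)\<in>r" using bdr by blast
      then show ?thesis using DOWN[of b c d a3] c1 c3 allr unfolding cfg_def by blast
    qed
    have "d3 \<noteq> c" using c3 a3c cov_iff by blast
    then have "cfg a2 c a3 d3" using a2c a3c c3 unfolding cfg_def by blast
    then have "(a2,c) \<in> N_diag (A,r)" using c3 ND0 by blast
    moreover have "cfg b c a2 d" using c1 c2 a2c unfolding cfg_def by blast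
    ultimately have False using g unfolding good_def by blast }
  ultimately show False using h by blast
qed

end


fun sl :: "'a rel \<Rightarrow> 'a + ('a \<times> 'a \<times> nat) \<Rightarrow> 'a + ('a \<times> 'a \<times> nat) \<Rightarrow> bool" where
  "sl r (Inl x) (Inl y) = ((x,y)\<in>r \<and> x\<noteq>y)"
| "sl r (Inl x) (Inr (p,q,j)) = ((x,p) \<in> r)"
| "sl r (Inr (p,q,i)) (Inl y) = ((q,y) \<in> r)"
| "sl r (Inr (p,q,i)) (Inr (p',q',j)) = ((p=p' \<and> q=q' \<and> i<j) \<or> (q,p') \<in> r)"

locale sub = fpo +
  fixes k :: "'a \<times> 'a \<Rightarrow> nat"
begin

abbreviation "C \<equiv> sd_carrier (A,r) k"
abbreviation "E \<equiv> sd_edges (A,r) k"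
abbreviation "S \<equiv> subdiv (A,r) k"

lemma inC_Inl[simp]: "Inl x \<in> C \<longleftrightarrow> x \<in> A"
  unfolding sd_carrier_def by auto

lemma inC_Inr[simp]: "Inr (p,q,j) \<in> C \<longleftrightarrow> covers (A,r) p q \<and> 1 \<le> j \<and> j \<le> k (p,q)"
  unfolding sd_carrier_def by (auto simp: diag_iff)

lemma cov_A: "covers (A,r) x y \<Longrightarrow> x \<in> A \<and> y \<in> A"
  unfolding covers_def by simp

lemma node_in: "covers (A,r) x y \<Longrightarrow> i \<le> Suc (k(x,y)) \<Longrightarrow> sd_node k x y i \<in> C"
  unfolding sd_node_def using cov_A by auto

lemma E_iff: "(u,v) \<in> E \<longleftrightarrow> (\<exists>x y i. covers (A,r) x y \<and> i \<le> k(x,y) \<and> u = sd_node k x y i \<and> v = sd_node k x y (Suc i))"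
  unfolding sd_edges_def by (auto simp: diag_iff)

lemma cov_less: "covers (A,r) x y \<Longrightarrow> (x,y)\<in>r \<and> x \<noteq> y"
  using cov_iff by blast

lemma E_sl: "(u,v) \<in> E \<Longrightarrow> u \<in> C \<and> v \<in> C \<and> sl r u v"
proof -
  assume "(u,v)\<in>E"
  then obtain x y i where h: "covers (A,r) x y" "i \<le> k(x,y)" "u = sd_node k x y i" "v = sd_node k x y (Suc i)"
    using E_iff by blast
  have "u \<in> C" "v \<in> C" using node_in h by auto
  moreover have "sl r u v"
    using h cov_less[OF h(1)] cov_A[OF h(1)] by (auto simp: sd_node_def rfl)
  ultimately show ?thesis by blast
qed

lemma sl_trans: "u \<in> C \<Longrightarrow> v \<in> C \<Longrightarrow> w \<in> C \<Longrightarrow> sl r u v \<Longrightarrow> sl r v w \<Longrightarrow> sl r u w"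
  apply (cases u; cases v; cases w)
  apply (auto dest!: cov_less)
  apply (meson trn asym)+
  done

lemma sl_irrefl: "u \<in> C \<Longrightarrow> \<not> sl r u u"
  apply (cases u)
   apply simp
  apply (rename_tac t, case_tac t)
  apply (auto dest!: cov_less dest: asym)
  done

lemma edge: "covers (A,r) x y \<Longrightarrow> i \<le> k(x,y) \<Longrightarrow> (sd_node k x y i, sd_node k x y (Suc i)) \<in> E"
  using E_iff by blast

lemma chain: "covers (A,r) x y \<Longrightarrow> i < j \<Longrightarrow> j \<le> Suc (k(x,y)) \<Longrightarrow> (sd_node k x y i, sd_node k x y j) \<in> E\<^sup>+"
proof (induction j)
  case 0 then show ?case by simp
next
  case (Suc j)
  have e: "(sd_node k x y j, sd_node k x y (Suc j)) \<in> E" using edge Suc.prems by simp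
  show ?case
  proof (cases "i = j")
    case True then show ?thesis using e by auto
  next
    case False
    then have "(sd_node k x y i, sd_node k x y j) \<in> E\<^sup>+" using Suc by simp
    then show ?thesis using e by (meson trancl.trancl_into_trancl)
  qed
qed

lemma chain_ends: "covers (A,r) x y \<Longrightarrow> (Inl x, Inl y) \<in> E\<^sup>+"
  using chain[of x y 0 "Suc (k(x,y))"] by (simp add: sd_node_def)

lemma Inl_trancl: "(x,y)\<in>r \<Longrightarrow> x\<noteq>y \<Longrightarrow> (Inl x, Inl y) \<in> E\<^sup>+"
proof -
  assume "(x,y)\<in>r" "x\<noteq>y"
  then have "(x,y) \<in> (Diag (A,r))\<^sup>+" by (rule diag_trancl)
  then show ?thesis
    by (induction rule: trancl_induct) (auto simp: diag_iff intro: chain_ends trancl_trans)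
qed

lemma Inl_rtrancl: "(x,y)\<in>r \<Longrightarrow> (Inl x, Inl y) \<in> E\<^sup>*"
  using Inl_trancl by (cases "x = y") (auto intro: trancl_into_rtrancl)

lemma Inr_from_Inl: "Inr (p,q,j) \<in> C \<Longrightarrow> (Inl p, Inr (p,q,j)) \<in> E\<^sup>+"
  using chain[of p q 0 j] by (auto simp: sd_node_def)

lemma Inr_to_Inl: "Inr (p,q,j) \<in> C \<Longrightarrow> (Inr (p,q,j), Inl q) \<in> E\<^sup>+"
  using chain[of p q j "Suc (k(p,q))"] by (auto simp: sd_node_def)

lemma Inr_Inr: "Inr (p,q,i) \<in> C \<Longrightarrow> Inr (p,q,j) \<in> C \<Longrightarrow> i < j \<Longrightarrow> (Inr (p,q,i), Inr (p,q,j)) \<in> E\<^sup>+"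
  using chain[of p q i j] by (auto simp: sd_node_def)

lemma trancl_iff: "(u,v) \<in> E\<^sup>+ \<longleftrightarrow> u \<in> C \<and> v \<in> C \<and> sl r u v"
proof
  assume "(u,v) \<in> E\<^sup>+"
  then show "u \<in> C \<and> v \<in> C \<and> sl r u v"
    by (induction rule: trancl_induct) (auto dest: E_sl intro: sl_trans)
next
  assume h: "u \<in> C \<and> v \<in> C \<and> sl r u v"
  show "(u,v) \<in> E\<^sup>+"
  proof (cases u)
    case (Inl x)
    show ?thesis
    proof (cases v)
      case (Inl y) then show ?thesis using h \<open>u = Inl x\<close> Inl_trancl by auto
    next
      case (Inr t)
      then obtain p q j where t: "v = Inr (p,q,j)" by (cases t) auto
      then have "(Inl x, Inl p) \<in> E\<^sup>*" using h \<open>u = Inl x\<close> Inl_rtrancl by auto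
      then show ?thesis using Inr_from_Inl[of p q j] h t \<open>u = Inl x\<close> by auto
    qed
  next
    case (Inr t)
    then obtain p q i where t: "u = Inr (p,q,i)" by (cases t) auto
    show ?thesis
    proof (cases v)
      case (Inl y)
      then have "(Inl q, Inl y) \<in> E\<^sup>*" using h t Inl_rtrancl by auto
      then show ?thesis using Inr_to_Inl[of p q i] h t \<open>v = Inl y\<close> by auto
    next
      case (Inr t')
      then obtain p' q' j where t': "v = Inr (p',q',j)" by (cases t') auto
      show ?thesis
      proof (cases "p=p' \<and> q=q' \<and> i<j")
        case True then show ?thesis using Inr_Inr h t t' by auto
      next
        case False
        then have "(Inl q, Inl p') \<in> E\<^sup>*" using h t t' Inl_rtrancl by auto
        then have "(Inr (p,q,i), Inl p') \<in> E\<^sup>+" using Inr_to_Inl[of p q i] h t by auto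
        then show ?thesis using Inr_from_Inl[of p' q' j] h t t' by (auto intro: trancl_trans)
      qed
    qed
  qed
qed

lemma ord_iff: "(u,v) \<in> snd S \<longleftrightarrow> u \<in> C \<and> v \<in> C \<and> (u = v \<or> sl r u v)"
  unfolding subdiv_def using trancl_iff by auto

lemma fstS[simp]: "fst S = C"
  unfolding subdiv_def by simp

lemma finC: "finite C"
proof -
  have "finite (Diag (A,r))"
    by (rule finite_subset[of _ "A \<times> A"]) (auto simp: diag_iff dest: cov_A intro: fin)
  then have "finite {Inr (x, y, i) |x y i. (x, y) \<in> Diag (A,r) \<and> 1 \<le> i \<and> i \<le> k (x, y)}"
  proof -
    have "{Inr (x, y, i) |x y i. (x, y) \<in> Diag (A,r) \<and> 1 \<le> i \<and> i \<le> k (x, y)}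
       \<subseteq> (\<lambda>((x,y),i). Inr (x,y,i)) ` (SIGMA e:Diag (A,r). {..k e})"
    proof
      fix z assume "z \<in> {Inr (x, y, i) |x y i. (x, y) \<in> Diag (A,r) \<and> 1 \<le> i \<and> i \<le> k (x, y)}"
      then obtain x y i where "z = Inr (x,y,i)" "(x, y) \<in> Diag (A,r)" "i \<le> k (x, y)" by blast
      then show "z \<in> (\<lambda>((x,y),i). Inr (x,y,i)) ` (SIGMA e:Diag (A,r). {..k e})"
        by (intro image_eqI[of _ _ "((x,y),i)"]) auto
    qed
    moreover have "finite (SIGMA e:Diag (A,r). {..k e})" using \<open>finite (Diag (A,r))\<close> by auto
    ultimately show ?thesis using finite_subset finite_imageI by blast
  qed
  then show ?thesis unfolding sd_carrier_def using fin by simp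
qed

lemma fpo_S: "fpo C (snd S)"
proof
  show "finite C" by (rule finC)
  show "partial_order_on C (snd S)"
    unfolding partial_order_on_def preorder_on_def refl_on_def trans_def antisym_def
    by (auto simp: ord_iff intro: sl_trans dest: sl_irrefl)
qed

lemma pless_iff: "pless S u v \<longleftrightarrow> u \<in> C \<and> v \<in> C \<and> sl r u v"
  unfolding pless_def ord_iff using sl_irrefl by auto

end


context sub begin

lemma betw_pq:
  assumes c: "covers (A,r) x y" and "(x,p)\<in>r" "(p,q)\<in>r" "p\<noteq>q" "(q,y)\<in>r"
  shows "p = x \<and> q = y"
proof -
  have nb: "\<And>w. (x,w)\<in>r \<Longrightarrow> (w,y)\<in>r \<Longrightarrow> w = x \<or> w = y" using c cov_iff by blast
  have h: "(p,y)\<in>r" "(x,q)\<in>r" using assms trn by blast+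
  have "p = x \<or> p = y" "q = x \<or> q = y" using nb h assms by auto
  then show ?thesis using assms h asym by blast
qed

lemma edge_nobetween:
  assumes c: "covers (A,r) x y" and i: "i \<le> k(x,y)" and z: "z \<in> C"
    and s1: "sl r (sd_node k x y i) z" and s2: "sl r z (sd_node k x y (Suc i))"
  shows False
proof -
  have xy: "(x,y)\<in>r" "x\<noteq>y" using c cov_iff by auto
  have nb: "\<And>w. (x,w)\<in>r \<Longrightarrow> (w,y)\<in>r \<Longrightarrow> w = x \<or> w = y" using c cov_iff by blast
  show False
  proof (cases z)
    case (Inl w)
    then show False using s1 s2 i xy nb z
      by (auto simp: sd_node_def split: if_splits dest: asym) (meson trn asym)+
  next
    case (Inr t)
    then obtain p q j where zz: "z = Inr (p,q,j)" by (cases t) auto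
    have pq: "(p,q)\<in>r" "p\<noteq>q" "1 \<le> j" "j \<le> k(p,q)" using z zz cov_iff by auto
    show False using s1 s2 i xy nb pq zz betw_pq[OF c, of p q]
      by (auto simp: sd_node_def split: if_splits dest: asym intro: trn)
  qed
qed

lemma E_ord: "(u,v) \<in> E \<Longrightarrow> (u,v) \<in> snd S"
  using E_sl ord_iff by blast

lemma covers_iff: "covers S u v \<longleftrightarrow> (u,v) \<in> E"
proof
  assume h: "covers S u v"
  then have "(u,v) \<in> E\<^sup>+" unfolding covers_def using pless_iff trancl_iff by auto
  then show "(u,v) \<in> E"
  proof (cases rule: tranclE)
    case base then show ?thesis .
  next
    case (step z)
    then have "z \<in> C" "sl r u z" "sl r z v" using trancl_iff E_sl by blast+
    then show ?thesis using h unfolding covers_def pless_iff by auto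
  qed
next
  assume h: "(u,v) \<in> E"
  then obtain x y i where e: "covers (A,r) x y" "i \<le> k(x,y)" "u = sd_node k x y i" "v = sd_node k x y (Suc i)"
    using E_iff by blast
  show "covers S u v"
    unfolding covers_def pless_iff using E_sl[OF h] edge_nobetween[OF e(1,2)] e(3,4) by auto
qed

lemma out_Inr: "(Inr (p,q,j), v) \<in> E \<Longrightarrow> v = sd_node k p q (Suc j)"
  unfolding E_iff sd_node_def by (auto split: if_splits)

lemma in_Inr: "(v, Inr (p,q,j)) \<in> E \<Longrightarrow> v = sd_node k p q (j - 1)"
  unfolding E_iff sd_node_def by (auto split: if_splits)

lemma out_Inl: "(Inl b, v) \<in> E \<Longrightarrow> \<exists>d. covers (A,r) b d \<and> v = sd_node k b d 1"
  unfolding E_iff sd_node_def by (auto split: if_splits)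

lemma in_Inl: "(v, Inl c) \<in> E \<Longrightarrow> \<exists>a. covers (A,r) a c \<and> v = sd_node k a c (k(a,c))"
  unfolding E_iff sd_node_def by (auto split: if_splits)

lemma Inl_Inl: "(Inl b, Inl c) \<in> E \<longleftrightarrow> covers (A,r) b c \<and> k(b,c) = 0"
  unfolding E_iff sd_node_def by (auto split: if_splits)

lemma G_dest:
  assumes "is_N S A' B' C' D'"
  shows "\<exists>a b c d. B' = Inl b \<and> C' = Inl c \<and> A' = sd_node k a c (k(a,c)) \<and> D' = sd_node k b d 1 \<and>
      cfg b c a d \<and> k(b,c) = 0 \<and> (0 < k(a,c) \<or> 0 < k(b,d) \<or> (a,d)\<notin>r)"
proof -
  have e: "(B',C') \<in> E" "(A',C') \<in> E" "(B',D') \<in> E"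
    using assms unfolding is_N_def covers_iff by auto
  have inc: "A' \<in> C" "D' \<in> C" "(A',D') \<notin> snd S" "(D',A') \<notin> snd S"
    using assms unfolding is_N_def Inc_def by auto
  have ab: "A' \<noteq> B'" using e(3) inc E_ord by blast
  have cd: "C' \<noteq> D'" using e(2) inc E_ord by blast
  obtain b where b: "B' = Inl b"
  proof (cases B')
    case (Inr t)
    then obtain p q j where "B' = Inr (p,q,j)" by (cases t) auto
    then have "C' = D'" using out_Inr e by metis
    then show ?thesis using cd by blast
  qed
  obtain c where c: "C' = Inl c"
  proof (cases C')
    case (Inr t)
    then obtain p q j where "C' = Inr (p,q,j)" by (cases t) auto
    then have "A' = B'" using in_Inr e by metis
    then show ?thesis using ab by blast
  qed
  have bc: "covers (A,r) b c" "k(b,c) = 0" using e(1) b c Inl_Inl by auto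
  obtain a where a: "covers (A,r) a c" "A' = sd_node k a c (k(a,c))" using in_Inl e(2) c by blast
  obtain d where d: "covers (A,r) b d" "D' = sd_node k b d 1" using out_Inl e(3) b by blast
  have "a \<noteq> b" using a b bc ab by (auto simp: sd_node_def)
  moreover have "d \<noteq> c" using d c bc cd by (auto simp: sd_node_def)
  ultimately have cf: "cfg b c a d" using a d bc unfolding cfg_def by blast
  have fl: "0 < k(a,c) \<or> 0 < k(b,d) \<or> (a,d)\<notin>r"
  proof (rule ccontr)
    assume "\<not> ?thesis"
    then have "k(a,c) = 0" "k(b,d) = 0" "(a,d)\<in>r" by auto
    then have "(A',D') \<in> snd S" using a d sub ord_iff by (auto simp: sd_node_def)
    then show False using inc by blast
  qed
  show ?thesis using a b c d bc cf fl by blast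
qed

lemma G_intro:
  assumes cf: "cfg b c a d" and k0: "k(b,c) = 0" and fl: "0 < k(a,c) \<or> 0 < k(b,d) \<or> (a,d)\<notin>r"
  shows "is_N S (sd_node k a c (k(a,c))) (Inl b) (Inl c) (sd_node k b d 1)"
proof -
  have cv: "covers (A,r) b c" "covers (A,r) a c" "covers (A,r) b d" "a\<noteq>b" "d\<noteq>c"
    using cf unfolding cfg_def by auto
  have e1: "(Inl b, Inl c) \<in> E" using Inl_Inl cv k0 by auto
  have e2: "(sd_node k a c (k(a,c)), Inl c) \<in> E" using edge[OF cv(2), of "k(a,c)"] by (simp add: sd_node_def)
  have e3: "(Inl b, sd_node k b d 1) \<in> E" using edge[OF cv(3), of 0] by (simp add: sd_node_def)
  have in1: "sd_node k a c (k(a,c)) \<in> C" "sd_node k b d 1 \<in> C" using node_in cv by auto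
  have f1: "(d,a)\<notin>r" using cv by (metis cov_iff trn)
  have f2: "(c,d)\<notin>r" using cv by (metis cov_iff trn)
  have f3: "(a,b)\<notin>r" using cv by (metis cov_iff trn)
  have f4: "(c,b)\<notin>r" using cv by (metis cov_iff asym)
  have f5: "a \<noteq> d" using cv by (metis cov_iff asym)
  have "(sd_node k a c (k(a,c)), sd_node k b d 1) \<notin> snd S \<and> (sd_node k b d 1, sd_node k a c (k(a,c))) \<notin> snd S"
    unfolding ord_iff using fl f1 f2 f3 f4 f5 cv(4) by (auto simp: sd_node_def)
  then show ?thesis unfolding is_N_def Inc_def covers_iff using e1 e2 e3 in1 by auto
qed

lemma ND1: "(Inl x, Inl y) \<in> N_diag S \<longleftrightarrow>
   (\<exists>a d. cfg x y a d \<and> k(x,y) = 0 \<and> (0 < k(a,y) \<or> 0 < k(x,d) \<or> (a,d)\<notin>r))"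
proof
  assume "(Inl x, Inl y) \<in> N_diag S"
  then obtain A' D' where "is_N S A' (Inl x) (Inl y) D'" unfolding N_diag_def by auto
  from G_dest[OF this] show "\<exists>a d. cfg x y a d \<and> k(x,y) = 0 \<and> (0 < k(a,y) \<or> 0 < k(x,d) \<or> (a,d)\<notin>r)"
    by auto
next
  assume "\<exists>a d. cfg x y a d \<and> k(x,y) = 0 \<and> (0 < k(a,y) \<or> 0 < k(x,d) \<or> (a,d)\<notin>r)"
  then obtain a d where "cfg x y a d" "k(x,y) = 0" "0 < k(a,y) \<or> 0 < k(x,d) \<or> (a,d)\<notin>r" by blast
  from G_intro[OF this] show "(Inl x, Inl y) \<in> N_diag S" unfolding N_diag_def by blast
qed

lemma BETW:
  assumes c: "covers (A,r) x y" and p1: "pless S (Inl x) u" and p2: "pless S u (Inl y)"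
  shows "1 \<le> k(x,y)"
proof -
  have u: "u \<in> C" "sl r (Inl x) u" "sl r u (Inl y)" using p1 p2 pless_iff by auto
  have nb: "\<And>w. (x,w)\<in>r \<Longrightarrow> (w,y)\<in>r \<Longrightarrow> w = x \<or> w = y" using c cov_iff by blast
  show ?thesis
  proof (cases u)
    case (Inl w)
    then show ?thesis using u nb by auto
  next
    case (Inr t)
    then obtain p q j where zz: "u = Inr (p,q,j)" by (cases t) auto
    have pq: "(p,q)\<in>r" "p\<noteq>q" "1 \<le> j" "j \<le> k(p,q)" using u zz cov_iff by auto
    have "(x,p)\<in>r" "(q,y)\<in>r" using u zz by auto
    then have h: "(x,p)\<in>r" "(q,y)\<in>r" "(p,y)\<in>r" "(x,q)\<in>r" using pq trn by blast+
    have "p = x \<or> p = y" "q = x \<or> q = y" using nb h by auto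
    then have "p = x" "q = y" using pq h asym by blast+
    then show ?thesis using pq by auto
  qed
qed

end


theorem theorem1:
  fixes A :: "'a set" and r :: "'a rel"
  assumes "finite A" and "partial_order_on A r"
  shows "N_free (SN (SN (A, r))) \<and>
    (\<forall>k :: 'a \<times> 'a \<Rightarrow> nat. N_free (subdiv (A, r) k) \<longrightarrow>
       (\<forall>x y. (x, y) \<in> Diag (A, r) \<and>
          (\<exists>u \<in> fst (SN (SN (A, r))). u \<notin> range (Inl \<circ> Inl) \<and>
             pless (SN (SN (A, r))) (Inl (Inl x)) u \<and> pless (SN (SN (A, r))) u (Inl (Inl y)))
          \<longrightarrow> 1 \<le> k (x, y)))"
proof -
  interpret f: fpo A r using assms by unfold_locales
  define k1 where "k1 = (\<lambda>e. if e \<in> N_diag (A,r) then 1 else (0::nat))"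
  interpret s1: sub A r k1 by unfold_locales
  define C1 where "C1 = s1.C"
  define R1 where "R1 = snd s1.S"
  have SN1: "SN (A,r) = (C1, R1)" unfolding C1_def R1_def SN_def k1_def subdiv_def by simp
  interpret f2: fpo C1 R1 unfolding C1_def R1_def by (rule s1.fpo_S)
  define k2 where "k2 = (\<lambda>e. if e \<in> N_diag (C1,R1) then 1 else (0::nat))"
  interpret s2: sub C1 R1 k2 by unfold_locales
  have SN2: "SN (SN (A,r)) = s2.S" by (subst SN1) (simp add: SN_def k2_def)
  have S1eq: "s1.S = (C1, R1)" unfolding C1_def R1_def subdiv_def by simp
  have cov1: "\<And>u v. covers (C1,R1) u v \<longleftrightarrow> (u,v) \<in> s1.E"
    using s1.covers_iff S1eq by simp
  have ND1': "\<And>x y. (Inl x, Inl y) \<in> N_diag (C1,R1) \<longleftrightarrow>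
     (\<exists>a d. f.cfg x y a d \<and> k1(x,y) = 0 \<and> (0 < k1(a,y) \<or> 0 < k1(x,d) \<or> (a,d)\<notin>r))"
    using s1.ND1 S1eq by simp
  have k1_iff: "\<And>e. 0 < k1 e \<longleftrightarrow> e \<in> N_diag (A,r)" unfolding k1_def by simp
  have k2_iff: "\<And>e. 0 < k2 e \<longleftrightarrow> e \<in> N_diag (C1,R1)" unfolding k2_def by simp
  have part1: "N_free (SN (SN (A, r)))"
    unfolding N_free_def SN2
  proof (intro notI, elim exE)
    fix A' B' C' D' assume "is_N s2.S A' B' C' D'"
    from s2.G_dest[OF this] obtain a' b' c' d' where
      g: "f2.cfg b' c' a' d'" "k2(b',c') = 0" "0 < k2(a',c') \<or> 0 < k2(b',d') \<or> (a',d')\<notin>R1"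
      by blast
    have e: "(b',c') \<in> s1.E" "(a',c') \<in> s1.E" "(b',d') \<in> s1.E" "a' \<noteq> b'" "d' \<noteq> c'"
      using g(1) unfolding f2.cfg_def cov1 by auto
    obtain b where b: "b' = Inl b"
    proof (cases b')
      case (Inr t)
      then obtain p q j where "b' = Inr (p,q,j)" by (cases t) auto
      then have "c' = d'" using s1.out_Inr e by metis
      then show ?thesis using e by blast
    qed
    obtain c where c: "c' = Inl c"
    proof (cases c')
      case (Inr t)
      then obtain p q j where "c' = Inr (p,q,j)" by (cases t) auto
      then have "a' = b'" using s1.in_Inr e by metis
      then show ?thesis using e by blast
    qed
    have bc: "covers (A,r) b c" "k1(b,c) = 0" using e(1) b c s1.Inl_Inl by auto
    obtain a where a: "covers (A,r) a c" "a' = sd_node k1 a c (k1(a,c))" using s1.in_Inl e(2) c by blast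
    obtain d where d: "covers (A,r) b d" "d' = sd_node k1 b d 1" using s1.out_Inl e(3) b by blast
    have "a \<noteq> b" using a b bc e by (auto simp: sd_node_def)
    moreover have "d \<noteq> c" using d c bc e by (auto simp: sd_node_def)
    ultimately have cf: "f.cfg b c a d" using a d bc unfolding f.cfg_def by blast
    have nbc: "(Inl b, Inl c) \<notin> N_diag (C1,R1)" using g(2) b c k2_iff by (metis less_numeral_extra(3))
    have gd: "f.good b c"
      unfolding f.good_def
    proof (intro allI impI)
      fix a0 d0 assume "f.cfg b c a0 d0"
      then have "\<not> (0 < k1(a0,c) \<or> 0 < k1(b,d0) \<or> (a0,d0)\<notin>r)" using nbc ND1' bc by blast
      then show "(a0,c)\<notin>N_diag (A,r) \<and> (b,d0)\<notin>N_diag (A,r) \<and> (a0,d0)\<in>r" using k1_iff by blast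
    qed
    have ka: "k1(a,c) = 0" "k1(b,d) = 0" "(a,d)\<in>r" using gd cf k1_iff unfolding f.good_def by auto
    then have a'': "a' = Inl a" "d' = Inl d" using a d by (auto simp: sd_node_def)
    have "(a',d') \<in> R1" using a'' ka(3) f.sub unfolding R1_def s1.ord_iff by auto
    moreover
    { assume "0 < k2(a',c')"
      then have "(Inl a, Inl c) \<in> N_diag (C1,R1)" using a'' c k2_iff by simp
      then obtain a2 d2 where "f.cfg a c a2 d2" "0 < k1(a2,c) \<or> 0 < k1(a,d2) \<or> (a2,d2)\<notin>r"
        using ND1' by blast
      then have False using f.PA[OF gd cf] k1_iff by blast }
    moreover
    { assume "0 < k2(b',d')"
      then have "(Inl b, Inl d) \<in> N_diag (C1,R1)" using a'' b k2_iff by simp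
      then obtain a2 d2 where "f.cfg b d a2 d2" "0 < k1(a2,d) \<or> 0 < k1(b,d2) \<or> (a2,d2)\<notin>r"
        using ND1' by blast
      then have False using f.PB[OF gd cf] k1_iff by blast }
    ultimately show False using g(3) by linarith
  qed
  have part2: "\<And>k :: 'a \<times> 'a \<Rightarrow> nat. N_free (subdiv (A, r) k) \<Longrightarrow> (x, y) \<in> Diag (A, r) \<Longrightarrow>
          (\<exists>u \<in> fst (SN (SN (A, r))). u \<notin> range (Inl \<circ> Inl) \<and>
             pless (SN (SN (A, r))) (Inl (Inl x)) u \<and> pless (SN (SN (A, r))) u (Inl (Inl y)))
          \<Longrightarrow> 1 \<le> k (x, y)" for x y
  proof -
    fix k :: "'a \<times> 'a \<Rightarrow> nat"
    assume nf: "N_free (subdiv (A, r) k)" and xy: "(x, y) \<in> Diag (A, r)"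
      and ex: "\<exists>u \<in> fst (SN (SN (A, r))). u \<notin> range (Inl \<circ> Inl) \<and>
             pless (SN (SN (A, r))) (Inl (Inl x)) u \<and> pless (SN (SN (A, r))) u (Inl (Inl y))"
    interpret s3: sub A r k by unfold_locales
    have nd: "\<And>p q. (p,q) \<in> N_diag (A,r) \<Longrightarrow> 1 \<le> k(p,q)"
    proof (rule ccontr)
      fix p q assume "(p,q) \<in> N_diag (A,r)" "\<not> 1 \<le> k(p,q)"
      then obtain a d where "f.cfg p q a d" "(a,d)\<notin>r" "k(p,q) = 0" using f.ND0 by auto
      then have "is_N s3.S (sd_node k a q (k(a,q))) (Inl p) (Inl q) (sd_node k p d 1)"
        using s3.G_intro by blast
      then show False using nf unfolding N_free_def by blast
    qed
    show "1 \<le> k(x,y)"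
    proof (cases "(x,y) \<in> N_diag (A,r)")
      case True then show ?thesis using nd by blast
    next
      case False
      then have "k1(x,y) = 0" unfolding k1_def by simp
      moreover have cxy: "covers (A,r) x y" using xy f.diag_iff by blast
      ultimately have "(Inl x, Inl y) \<in> s1.E" using s1.Inl_Inl by blast
      then have cv: "covers (C1,R1) (Inl x) (Inl y)" using cov1 by blast
      obtain u where "pless s2.S (Inl (Inl x)) u" "pless s2.S u (Inl (Inl y))" using ex SN2 by auto
      then have "1 \<le> k2(Inl x, Inl y)" using s2.BETW[OF cv] by blast
      then have "(Inl x, Inl y) \<in> N_diag (C1,R1)" using k2_iff Suc_le_eq by (metis One_nat_def)
      then obtain a d where ad: "f.cfg x y a d" "0 < k1(a,y) \<or> 0 < k1(x,d) \<or> (a,d)\<notin>r"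
        using ND1' by blast
      show ?thesis
      proof (rule ccontr)
        assume "\<not> 1 \<le> k(x,y)"
        then have k0: "k(x,y) = 0" by simp
        have "0 < k(a,y) \<or> 0 < k(x,d) \<or> (a,d)\<notin>r" using ad(2) k1_iff nd by fastforce
        then have "is_N s3.S (sd_node k a y (k(a,y))) (Inl x) (Inl y) (sd_node k x d 1)"
          using s3.G_intro[OF ad(1) k0] by blast
        then show False using nf unfolding N_free_def by blast
      qed
    qed
  qed
  show ?thesis using part1 part2 by blast
qed


end
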